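(* Let $\alpha=(\alpha_1,\dots,\alpha_n)\in\mathbb{R}^n$ with $\alpha_1,\dots,\alpha_n,1$ linearly independent over $\mathbb{Q}$, and $\ell=n+1$. If $L_\alpha$ is badly approximable, then there is $c>0$ such that there are infinitely many $A\in\mathrm{GL}(\ell,\mathbb{Z})$ with $$\|A(\alpha_1,\dots,\alpha_n,1)^\top\|_\infty<c\,\|A\|_\infty^{-n}.$$
   Context: $L_\alpha(x)=\alpha_1x_1+\cdots+\alpha_nx_n$. For $t\in\mathbb{R}$, $\|t\|$ is the distance to the nearest integer; for a real matrix or vector, $\|\cdot\|_\infty$ is the maximum absolute value of its entries. $L_\alpha$ is badly approximable if there is $c>0$ with $\|L_\alpha(q)\|\ge c\|q\|_\infty^{-n}$ for all nonzero $q\in\mathbb{Z}^n$. *)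

theory Defs
  imports Complex_Main "Jordan_Normal_Form.Determinant"
begin

definition dist_int :: "real \<Rightarrow> real" where
  "dist_int t = \<bar>t - of_int (round t)\<bar>"

(* L_alpha(q) = alpha_1 q_1 + ... + alpha_n q_n, with alpha, q indexed by 0..<n *)
definition lin_form :: "nat \<Rightarrow> (nat \<Rightarrow> real) \<Rightarrow> (nat \<Rightarrow> int) \<Rightarrow> real" where
  "lin_form n \<alpha> q = (\<Sum>i<n. \<alpha> i * of_int (q i))"

definition int_vec_sup_norm :: "nat \<Rightarrow> (nat \<Rightarrow> int) \<Rightarrow> real" where
  "int_vec_sup_norm n q = Max ((\<lambda>i. real_of_int \<bar>q i\<bar>) ` {..<n})"

definition badly_approximable :: "nat \<Rightarrow> (nat \<Rightarrow> real) \<Rightarrow> bool" where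
  "badly_approximable n \<alpha> \<longleftrightarrow>
     (\<exists>c>0. \<forall>q. (\<exists>i<n. q i \<noteq> 0) \<longrightarrow>
        dist_int (lin_form n \<alpha> q) \<ge> c * int_vec_sup_norm n q powr (- real n))"

definition lin_indep_with_one :: "nat \<Rightarrow> (nat \<Rightarrow> real) \<Rightarrow> bool" where
  "lin_indep_with_one n \<alpha> \<longleftrightarrow>
     (\<forall>r :: nat \<Rightarrow> real. \<forall>r0 :: real. (\<forall>i<n. r i \<in> \<rat>) \<longrightarrow> r0 \<in> \<rat> \<longrightarrow>
        (\<Sum>i<n. r i * \<alpha> i) + r0 = 0 \<longrightarrow> (\<forall>i<n. r i = 0) \<and> r0 = 0)"

(* GL(l, Z): integer l x l matrices with integer inverse, i.e. det = +-1 *)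
definition GL_int :: "nat \<Rightarrow> int mat set" where
  "GL_int l = {A. A \<in> carrier_mat l l \<and> (det A = 1 \<or> det A = -1)}"

definition mat_sup_norm :: "int mat \<Rightarrow> real" where
  "mat_sup_norm A = Max ({real_of_int \<bar>A $$ (i,j)\<bar> | i j. i < dim_row A \<and> j < dim_col A} \<union> {0})"

definition ext_vec :: "nat \<Rightarrow> (nat \<Rightarrow> real) \<Rightarrow> real vec" where
  "ext_vec n \<alpha> = vec (n+1) (\<lambda>i. if i < n then \<alpha> i else 1)"

definition real_vec_sup_norm :: "real vec \<Rightarrow> real" where
  "real_vec_sup_norm v = Max ((\<lambda>i. \<bar>v $ i\<bar>) ` {..<dim_vec v} \<union> {0})"

end

theory Submission imports Defs begin

lemma if01_mult[simp]: "(if a then 1 else 0) * (b::'a::semiring_1) = (if a then b else 0)"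
  by simp

definition qf :: "real mat \<Rightarrow> real vec \<Rightarrow> real" where
  "qf G x = x \<bullet> (G *\<^sub>v x)"

abbreviation rM :: "int mat \<Rightarrow> real mat" where "rM \<equiv> map_mat real_of_int"
abbreviation rI :: "int vec \<Rightarrow> real vec" where "rI \<equiv> map_vec real_of_int"

lemma qf_diag:
  assumes U: "U \<in> carrier_mat d d" and G: "G \<in> carrier_mat d d" and k: "k < d"
  shows "(transpose_mat U * G * U) $$ (k,k) = qf G (col U k)"
proof -
  have "transpose_mat U * G * U = transpose_mat U * (G * U)"
    using U G by (simp add: assoc_mult_mat)
  also have "\<dots> $$ (k,k) = row (transpose_mat U) k \<bullet> col (G*U) k"
    using U G k by simp
  also have "\<dots> = col U k \<bullet> (G *\<^sub>v col U k)"
    using U G k by (subst col_mult2[OF G U k]) simp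
  finally show ?thesis unfolding qf_def .
qed

lemma qf_transport:
  assumes U: "U \<in> carrier_mat d d" and G: "G \<in> carrier_mat d d" and z: "z \<in> carrier_vec d"
  shows "qf (transpose_mat U * G * U) z = qf G (U *\<^sub>v z)"
proof -
  have "(transpose_mat U * G * U) *\<^sub>v z = transpose_mat U *\<^sub>v (G *\<^sub>v (U *\<^sub>v z))"
    using U G z by (subst assoc_mult_mat_vec[of _ d d _ d]) (auto simp: assoc_mult_mat_vec[of _ d d _ d])
  hence "qf (transpose_mat U * G * U) z = z \<bullet> (transpose_mat U *\<^sub>v (G *\<^sub>v (U *\<^sub>v z)))"
    unfolding qf_def by simp
  also have "\<dots> = (transpose_mat U *\<^sub>v (G *\<^sub>v (U *\<^sub>v z))) \<bullet> z"
    using U G z by (intro comm_scalar_prod[of _ d]) auto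
  also have "\<dots> = (G *\<^sub>v (U *\<^sub>v z)) \<bullet> (U *\<^sub>v z)"
    using U G z by (intro transpose_vec_mult_scalar) auto
  also have "\<dots> = (U *\<^sub>v z) \<bullet> (G *\<^sub>v (U *\<^sub>v z))"
    using U G z by (intro comm_scalar_prod[of _ d]) auto
  finally show ?thesis unfolding qf_def .
qed

lemma GL_mult: "U \<in> GL_int d \<Longrightarrow> V \<in> GL_int d \<Longrightarrow> U * V \<in> GL_int d"
  unfolding GL_int_def by (auto simp: det_mult)

lemma GL_one: "1\<^sub>m d \<in> GL_int d"
  unfolding GL_int_def by auto

lemma GL_transpose: "U \<in> GL_int d \<Longrightarrow> transpose_mat U \<in> GL_int d"
  unfolding GL_int_def by (auto simp: det_transpose)

lemma GL_nonzero:
  assumes "U \<in> GL_int d" "z \<in> carrier_vec d" "z \<noteq> 0\<^sub>v d"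
  shows "U *\<^sub>v z \<noteq> 0\<^sub>v d"
proof
  assume "U *\<^sub>v z = 0\<^sub>v d"
  hence "det U = 0" using assms unfolding GL_int_def
    by (subst det_0_iff_vec_prod_zero[of U d]) auto
  thus False using assms unfolding GL_int_def by auto
qed

lemma GL_inverse:
  assumes "T \<in> GL_int d"
  shows "\<exists>V \<in> GL_int d. V * T = 1\<^sub>m d"
proof -
  have T: "T \<in> carrier_mat d d" and dt: "det T * det T = 1" using assms unfolding GL_int_def by auto
  define V where "V = det T \<cdot>\<^sub>m adj_mat T"
  have V: "V \<in> carrier_mat d d" unfolding V_def using adj_mat(1)[OF T] by simp
  have "V * T = det T \<cdot>\<^sub>m (adj_mat T * T)" unfolding V_def
    using adj_mat(1)[OF T] T by (simp add: mult_smult_assoc_mat)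
  also have "\<dots> = 1\<^sub>m d" using adj_mat(3)[OF T] dt by (auto intro!: eq_matI)
  finally have VT: "V * T = 1\<^sub>m d" .
  have "det V * det T = 1" using det_mult[OF V T] VT by simp
  hence "det V = 1 \<or> det V = -1" using dt
    by (metis mult_cancel_right2 mult_minus_right zmult_eq_1_iff)
  thus ?thesis using V VT unfolding GL_int_def by auto
qed

lemma addrow_vec:
  fixes y :: "'a :: comm_ring_1 vec"
  assumes y: "y \<in> carrier_vec d" and ij: "i < d" "j < d" "i \<noteq> j" and k: "k < d"
  shows "(addrow_mat d s i j *\<^sub>v y) $ k = (if k = i then y$k + s * y$j else y$k)"
proof -
  have "(addrow_mat d s i j *\<^sub>v y) $ k =
     (\<Sum>l\<in>{0..<d}. (if l = k then y$l else 0) + (if k = i \<and> l = j then s * y$l else 0))"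
    using y ij k by (auto simp: scalar_prod_def intro!: sum.cong)
  also have "\<dots> = (if k = i then y$k + s * y$j else y$k)"
    using ij k by (simp add: sum.distrib)
  finally show ?thesis .
qed

lemma swaprows_vec:
  fixes y :: "'a :: comm_ring_1 vec"
  assumes y: "y \<in> carrier_vec d" and p: "p < d" and k: "k < d"
  shows "(swaprows_mat d 0 p *\<^sub>v y) $ k = y $ (if k = 0 then p else if k = p then 0 else k)"
proof -
  have "(swaprows_mat d 0 p *\<^sub>v y) $ k =
     (\<Sum>l\<in>{0..<d}. (if l = (if k = 0 then p else if k = p then 0 else k) then y$l else 0))"
    using y p k by (auto simp: scalar_prod_def intro!: sum.cong)
  also have "\<dots> = y $ (if k = 0 then p else if k = p then 0 else k)"
    using p k by (simp add: sum.delta')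
  finally show ?thesis .
qed

definition mu :: "int vec \<Rightarrow> nat" where
  "mu y = (\<Sum>i<dim_vec y. nat \<bar>y$i\<bar>)"

lemma reduce_step:
  fixes y :: "int vec"
  assumes y: "y \<in> carrier_vec d" and ij: "i < d" "j < d" "i \<noteq> j"
    and nz: "y$i \<noteq> 0" "y$j \<noteq> 0" and le: "\<bar>y$j\<bar> \<le> \<bar>y$i\<bar>"
  shows "\<exists>E\<in>GL_int d. mu (E *\<^sub>v y) < mu y"
proof -
  define s where "s = - (sgn (y$i) * sgn (y$j))"
  define E where "E = addrow_mat d s i j"
  have EGL: "E \<in> GL_int d" unfolding E_def GL_int_def using ij by (simp add: det_addrow_mat)
  have Ey: "(E *\<^sub>v y) $ k = (if k = i then y$k + s * y$j else y$k)" if "k < d" for k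
    unfolding E_def using addrow_vec[OF y ij that] .
  have abs_i: "\<bar>y$i + s * y$j\<bar> < \<bar>y$i\<bar>"
    using nz le unfolding s_def
    by (cases "y$i > 0"; cases "y$j > 0") (auto simp: sgn_if)
  have Ec: "E \<in> carrier_mat d d" using EGL unfolding GL_int_def by auto
  have "mu (E *\<^sub>v y) = (\<Sum>k<d. nat \<bar>(E *\<^sub>v y)$k\<bar>)"
    unfolding mu_def using Ec by simp
  also have "\<dots> < (\<Sum>k<d. nat \<bar>y$k\<bar>)"
  proof (rule sum_strict_mono_ex1)
    show "\<forall>k\<in>{..<d}. nat \<bar>(E *\<^sub>v y)$k\<bar> \<le> nat \<bar>y$k\<bar>"
      using Ey abs_i by auto
    show "\<exists>k\<in>{..<d}. nat \<bar>(E *\<^sub>v y)$k\<bar> < nat \<bar>y$k\<bar>"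
      using Ey abs_i ij by (intro bexI[of _ i]) auto
  qed simp
  also have "\<dots> = mu y" unfolding mu_def using y by simp
  finally show ?thesis using EGL by blast
qed

lemma reduce_to_unit:
  fixes x :: "int vec"
  assumes x: "x \<in> carrier_vec d" and nz: "x \<noteq> 0\<^sub>v d" and d: "d > 0"
  shows "\<exists>T\<in>GL_int d. \<exists>k. T *\<^sub>v x = k \<cdot>\<^sub>v unit_vec d 0"
proof -
  obtain T where T: "T \<in> GL_int d" and Tmin: "\<And>T'. T' \<in> GL_int d \<Longrightarrow> mu (T *\<^sub>v x) \<le> mu (T' *\<^sub>v x)"
    using ex_has_least_nat[of "\<lambda>T. T \<in> GL_int d" "1\<^sub>m d" "\<lambda>T. mu (T *\<^sub>v x)"] GL_one by blast
  define y where "y = T *\<^sub>v x"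
  have Tc: "T \<in> carrier_mat d d" using T unfolding GL_int_def by auto
  have y: "y \<in> carrier_vec d" unfolding y_def using Tc x by simp
  have ynz: "y \<noteq> 0\<^sub>v d" unfolding y_def using GL_nonzero[OF T x nz] .
  have one: "y$i = 0 \<or> y$j = 0" if ij: "i < d" "j < d" "i \<noteq> j" for i j
  proof (rule ccontr)
    assume "\<not> (y$i = 0 \<or> y$j = 0)"
    hence nz2: "y$i \<noteq> 0" "y$j \<noteq> 0" by auto
    have "\<exists>E\<in>GL_int d. mu (E *\<^sub>v y) < mu y"
    proof (cases "\<bar>y$j\<bar> \<le> \<bar>y$i\<bar>")
      case True thus ?thesis using reduce_step[OF y ij nz2] by blast
    next
      case False thus ?thesis using reduce_step[OF y ij(2,1) _ nz2(2,1)] ij by force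
    qed
    then obtain E where E: "E \<in> GL_int d" and lt: "mu (E *\<^sub>v y) < mu y" by blast
    have Ec: "E \<in> carrier_mat d d" using E unfolding GL_int_def by auto
    have "(E * T) *\<^sub>v x = E *\<^sub>v y" unfolding y_def using Ec Tc x by (simp add: assoc_mult_mat_vec)
    hence "mu ((E*T) *\<^sub>v x) < mu (T *\<^sub>v x)" using lt unfolding y_def by simp
    with Tmin[OF GL_mult[OF E T]] show False by simp
  qed
  obtain p where p: "p < d" "y$p \<noteq> 0"
    using ynz y by (metis eq_vecI index_zero_vec(1,2) carrier_vecD)
  have others: "y$k = 0" if "k < d" "k \<noteq> p" for k using one[OF that(1) p(1) that(2)] p by auto
  show ?thesis
  proof (cases "p = 0")
    case True
    have "y = y$p \<cdot>\<^sub>v unit_vec d 0"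
      by (rule eq_vecI) (use y others True in \<open>auto simp: unit_vec_def\<close>)
    thus ?thesis using T unfolding y_def by blast
  next
    case False
    define P :: "int mat" where "P = swaprows_mat d 0 p"
    have PGL: "P \<in> GL_int d" unfolding P_def GL_int_def using False p d by (simp add: det_swaprows_mat)
    have Pc: "P \<in> carrier_mat d d" unfolding P_def by simp
    have "P *\<^sub>v y = y$p \<cdot>\<^sub>v unit_vec d 0"
    proof (rule eq_vecI)
      fix k assume "k < dim_vec (y $ p \<cdot>\<^sub>v unit_vec d 0)"
      hence k: "k < d" by simp
      show "(P *\<^sub>v y) $ k = (y $ p \<cdot>\<^sub>v unit_vec d 0) $ k"
        unfolding P_def swaprows_vec[OF y p(1) k] using k others False by (auto simp: unit_vec_def)
    qed (use Pc in simp)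
    moreover have "(P * T) *\<^sub>v x = P *\<^sub>v y" unfolding y_def using Pc Tc x by (simp add: assoc_mult_mat_vec)
    ultimately show ?thesis using GL_mult[OF PGL T] by metis
  qed
qed

lemma primitive_col:
  fixes x :: "int vec"
  assumes x: "x \<in> carrier_vec d" and nz: "x \<noteq> 0\<^sub>v d" and d: "d > 0"
  shows "\<exists>V\<in>GL_int d. \<exists>k. x = k \<cdot>\<^sub>v col V 0"
proof -
  obtain T k where T: "T \<in> GL_int d" and Tx: "T *\<^sub>v x = k \<cdot>\<^sub>v unit_vec d 0"
    using reduce_to_unit[OF assms] by blast
  obtain V where V: "V \<in> GL_int d" and VT: "V * T = 1\<^sub>m d" using GL_inverse[OF T] by blast
  have Vc: "V \<in> carrier_mat d d" and Tc: "T \<in> carrier_mat d d" using V T unfolding GL_int_def by auto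
  have "x = (V * T) *\<^sub>v x" using VT x by simp
  also have "\<dots> = V *\<^sub>v (k \<cdot>\<^sub>v unit_vec d 0)" using Vc Tc x Tx by (simp add: assoc_mult_mat_vec)
  also have "\<dots> = k \<cdot>\<^sub>v col V 0"
    by (rule eq_vecI) (use Vc d in \<open>auto simp: scalar_prod_right_unit\<close>)
  finally show ?thesis using V by blast
qed

lemma qf_sum:
  assumes G: "G \<in> carrier_mat n n" and v: "v \<in> carrier_vec n"
  shows "qf G v = (\<Sum>i = 0..<n. \<Sum>j = 0..<n. v$i * G$$(i,j) * v$j)"
  unfolding qf_def scalar_prod_def using G v
  by (auto simp: sum_distrib_left mult.assoc scalar_prod_def intro!: sum.cong)

definition gv :: "real mat \<Rightarrow> nat \<Rightarrow> real vec" where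
  "gv G d = vec d (\<lambda>j. G$$(0, Suc j))"
definition G22 :: "real mat \<Rightarrow> nat \<Rightarrow> real mat" where
  "G22 G d = mat d d (\<lambda>(i,j). G$$(Suc i, Suc j))"
definition schur :: "real mat \<Rightarrow> nat \<Rightarrow> real mat" where
  "schur G d = mat d d (\<lambda>(i,j). G$$(Suc i, Suc j) - G$$(0,Suc i) * G$$(0,Suc j) / G$$(0,0))"

lemma qf_vCons:
  assumes G: "G \<in> carrier_mat (Suc d) (Suc d)" and sym: "transpose_mat G = G"
    and y: "y \<in> carrier_vec d"
  shows "qf G (vCons t y) = G$$(0,0) * t^2 + 2 * t * (gv G d \<bullet> y) + qf (G22 G d) y"
proof -
  have s: "G$$(Suc i, 0) = G$$(0, Suc i)" if "i < d" for i
    using arg_cong[OF sym, of "\<lambda>A. A $$ (0, Suc i)"] that G by auto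
  have "qf G (vCons t y) = (\<Sum>i = 0..<Suc d. \<Sum>j = 0..<Suc d. vCons t y$i * G$$(i,j) * vCons t y$j)"
    using qf_sum[OF G] y by simp
  also have "\<dots> = t * G$$(0,0) * t + (\<Sum>j = 0..<d. t * G$$(0,Suc j) * y$j)
      + ((\<Sum>i = 0..<d. y$i * G$$(Suc i,0) * t) + (\<Sum>i = 0..<d. \<Sum>j = 0..<d. y$i * G$$(Suc i,Suc j) * y$j))"
    unfolding sum.atLeast0_lessThan_Suc_shift by (simp add: sum.distrib o_def del: sum.atLeast0_lessThan_Suc)
  also have "(\<Sum>i = 0..<d. y$i * G$$(Suc i,0) * t) = (\<Sum>j = 0..<d. t * G$$(0,Suc j) * y$j)"
    using s by (auto intro!: sum.cong)
  also have "(\<Sum>i = 0..<d. \<Sum>j = 0..<d. y$i * G$$(Suc i,Suc j) * y$j) = qf (G22 G d) y"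
    using qf_sum[of "G22 G d" d y] y by (simp add: G22_def)
  also have "(\<Sum>j = 0..<d. t * G$$(0,Suc j) * y$j) = t * (gv G d \<bullet> y)"
    using y by (simp add: gv_def scalar_prod_def sum_distrib_left mult.assoc)
  finally show ?thesis by (simp add: power2_eq_square)
qed

lemma qf_schur:
  assumes y: "y \<in> carrier_vec d"
  shows "qf (schur G d) y = qf (G22 G d) y - (gv G d \<bullet> y)^2 / G$$(0,0)"
proof -
  have "qf (schur G d) y = (\<Sum>i = 0..<d. \<Sum>j = 0..<d. y$i * G$$(Suc i, Suc j) * y$j
           - (y$i * G$$(0,Suc i)) * (y$j * G$$(0,Suc j)) / G$$(0,0))"
    using qf_sum[of "schur G d" d y] y by (simp add: schur_def algebra_simps)
  also have "\<dots> = (\<Sum>i = 0..<d. \<Sum>j = 0..<d. y$i * G$$(Suc i, Suc j) * y$j)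
      - (\<Sum>i = 0..<d. \<Sum>j = 0..<d. (y$i * G$$(0,Suc i)) * (y$j * G$$(0,Suc j))) / G$$(0,0)"
    by (simp add: sum_subtractf sum_divide_distrib)
  also have "(\<Sum>i = 0..<d. \<Sum>j = 0..<d. (y$i * G$$(0,Suc i)) * (y$j * G$$(0,Suc j)))
       = (gv G d \<bullet> y)^2"
    using y by (simp add: power2_eq_square sum_product gv_def scalar_prod_def mult.commute)
  also have "(\<Sum>i = 0..<d. \<Sum>j = 0..<d. y$i * G$$(Suc i, Suc j) * y$j) = qf (G22 G d) y"
    using qf_sum[of "G22 G d" d y] y by (simp add: G22_def)
  finally show ?thesis .
qed

lemma qf_vCons_schur:
  assumes G: "G \<in> carrier_mat (Suc d) (Suc d)" and sym: "transpose_mat G = G"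
    and y: "y \<in> carrier_vec d" and a: "G$$(0,0) \<noteq> 0"
  shows "qf G (vCons t y) = G$$(0,0) * (t + (gv G d \<bullet> y) / G$$(0,0))^2 + qf (schur G d) y"
  unfolding qf_vCons[OF G sym y] qf_schur[OF y] using a
  by (simp add: power2_eq_square field_simps)

lemma schur_carrier: "schur G d \<in> carrier_mat d d" unfolding schur_def by simp

lemma schur_sym:
  assumes G: "G \<in> carrier_mat (Suc d) (Suc d)" and sym: "transpose_mat G = G"
  shows "transpose_mat (schur G d) = schur G d"
proof (rule eq_matI)
  fix i j assume ij: "i < dim_row (schur G d)" "j < dim_col (schur G d)"
  have "G$$(Suc j, Suc i) = G$$(Suc i, Suc j)"
    using arg_cong[OF sym, of "\<lambda>A. A $$ (Suc i, Suc j)"] ij G by (auto simp: schur_def)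
  thus "transpose_mat (schur G d) $$ (i,j) = schur G d $$ (i,j)"
    using ij by (auto simp: schur_def)
qed (auto simp: schur_def)

lemma det_schur:
  assumes G: "G \<in> carrier_mat (Suc d) (Suc d)" and sym: "transpose_mat G = G"
    and a: "G$$(0,0) \<noteq> 0"
  shows "det G = G$$(0,0) * det (schur G d)"
proof -
  define a where "a = G$$(0,0)"
  have s: "G$$(i, 0) = G$$(0, i)" if "i < Suc d" for i
    using arg_cong[OF sym, of "\<lambda>A. A $$ (0, i)"] that G by auto
  define L :: "real mat" where "L = mat (Suc d) (Suc d) (\<lambda>(i,j). if i = j then 1 else if j = 0 then - G$$(i,0)/a else 0)"
  define N :: "real mat" where "N = mat (Suc d) (Suc d) (\<lambda>(i,j). if i = 0 then G$$(0,j) else G$$(i,j) - G$$(i,0) * G$$(0,j) / a)"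
  have Lc: "L \<in> carrier_mat (Suc d) (Suc d)" unfolding L_def by simp
  have detL: "det L = 1"
  proof -
    have "det L = prod_list (diag_mat L)"
      by (rule det_lower_triangular[OF _ Lc]) (auto simp: L_def)
    also have "diag_mat L = map (\<lambda>_. 1) [0..<Suc d]"
      unfolding diag_mat_def L_def by auto
    finally show ?thesis by (simp add: map_replicate_const)  
  qed
  have LG: "L * G = N"
  proof (rule eq_matI)
    fix i j assume ij: "i < dim_row N" "j < dim_col N"
    hence i: "i < Suc d" and j: "j < Suc d" by (auto simp: N_def)
    have "(L * G) $$ (i,j) = (\<Sum>k = 0..<Suc d. L$$(i,k) * G$$(k,j))"
      using i j G Lc by (simp add: scalar_prod_def)
    also have "\<dots> = (\<Sum>k = 0..<Suc d. (if k = i then G$$(k,j) else 0) + (if k = 0 \<and> i \<noteq> 0 then - G$$(i,0)/a * G$$(0,j) else 0))"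
      using i by (intro sum.cong refl) (auto simp: L_def)
    also have "\<dots> = N $$ (i,j)"
      using i j by (auto simp: sum.distrib N_def)
    finally show "(L * G) $$ (i,j) = N $$ (i,j)" .
  qed (use Lc G in \<open>auto simp: N_def\<close>)
  have "det N = det L * det G" using det_mult[OF Lc G] LG by simp
  hence dNG: "det N = det G" using detL by simp
  define A1 :: "real mat" where "A1 = mat 1 1 (\<lambda>_. a)"
  define A2 :: "real mat" where "A2 = mat 1 d (\<lambda>(_,j). G$$(0, Suc j))"
  have N4: "N = four_block_mat A1 A2 (0\<^sub>m d 1) (schur G d)"
  proof (rule eq_matI)
    fix i j assume ij: "i < dim_row (four_block_mat A1 A2 (0\<^sub>m d 1) (schur G d))"
         "j < dim_col (four_block_mat A1 A2 (0\<^sub>m d 1) (schur G d))"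
    hence i: "i < Suc d" and j: "j < Suc d" by (auto simp: A1_def schur_def)
    show "N $$ (i,j) = four_block_mat A1 A2 (0\<^sub>m d 1) (schur G d) $$ (i,j)"
    proof (cases "i = 0")
      case True thus ?thesis using j by (cases j) (auto simp: N_def A1_def A2_def a_def four_block_mat_def schur_def)
    next
      case False
      then obtain i' where i': "i = Suc i'" by (cases i) auto
      show ?thesis
      proof (cases j)
        case 0 thus ?thesis using i' i a s[OF i] by (auto simp: N_def A1_def A2_def a_def four_block_mat_def schur_def)
      next
        case (Suc j') thus ?thesis using i' i j s[OF i] by (auto simp: N_def A1_def A2_def a_def four_block_mat_def schur_def)
      qed
    qed
  qed (auto simp: N_def A1_def schur_def four_block_mat_def)
  have "det N = det A1 * det (schur G d)"
    unfolding N4 by (rule det_four_block_mat_lower_left_zero_col) (auto simp: A1_def A2_def schur_def)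
  also have "det A1 = a" by (subst det_single) (auto simp: A1_def)
  finally show ?thesis using dNG a_def by simp
qed

lemma rI_vCons: "rI (vCons t y) = vCons (real_of_int t) (rI y)"
  by (rule eq_vecI) (auto simp: vec_index_vCons)

lemma rI_smult: "rI (k \<cdot>\<^sub>v w) = real_of_int k \<cdot>\<^sub>v rI w"
  by (rule eq_vecI) auto

lemma qf_smult:
  assumes G: "G \<in> carrier_mat n n" and v: "v \<in> carrier_vec n"
  shows "qf G (c \<cdot>\<^sub>v v) = c^2 * qf G v"
  using qf_sum[OF G v] qf_sum[OF G, of "c \<cdot>\<^sub>v v"] v
  by (simp add: sum_distrib_left power2_eq_square algebra_simps)

lemma qf_zero: "G \<in> carrier_mat n n \<Longrightarrow> qf G (0\<^sub>v n) = 0" unfolding qf_def by (simp add: scalar_prod_def)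

definition minb :: "real mat \<Rightarrow> nat \<Rightarrow> real \<Rightarrow> bool" where
  "minb G d m \<longleftrightarrow> (\<forall>x::int vec. x \<in> carrier_vec d \<longrightarrow> x \<noteq> 0\<^sub>v d \<longrightarrow> m \<le> qf G (rI x))"

lemma rI_nonzero: "x \<in> carrier_vec d \<Longrightarrow> x \<noteq> 0\<^sub>v d \<Longrightarrow> rI x \<noteq> 0\<^sub>v d"
proof
  assume x: "x \<in> carrier_vec d" and nz: "x \<noteq> 0\<^sub>v d" and e: "rI x = 0\<^sub>v d"
  have "x = 0\<^sub>v d"
  proof (rule eq_vecI)
    fix i assume "i < dim_vec (0\<^sub>v d :: int vec)"
    hence i: "i < d" by simp
    have "rI x $ i = 0" using e i by simp
    thus "x $ i = 0\<^sub>v d $ i" using i x by simp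
  qed (use x in simp)
  with nz show False by simp
qed

lemma reduction_base:
  assumes G: "G \<in> carrier_mat 1 1"
  shows "\<exists>U\<in>GL_int 1. \<forall>k<1. qf G (col (rM U) k) \<le> det G"
proof -
  have "qf G (col (rM (1\<^sub>m 1)) 0) = G $$ (0,0)"
    using G by (auto simp: qf_def scalar_prod_def)
  thus ?thesis using GL_one[of 1] det_single[OF G] by force
qed

lemma reduction_step:
  assumes d: "d > 0"
  and IH: "\<forall>m>0. \<forall>D. \<exists>C. \<forall>H. H \<in> carrier_mat d d \<longrightarrow> transpose_mat H = H \<longrightarrow> det H \<le> D
             \<longrightarrow> minb H d m \<longrightarrow> (\<exists>U\<in>GL_int d. \<forall>k<d. qf H (col (rM U) k) \<le> C)"
  and m: "m > 0"
  shows "\<exists>C. \<forall>G. G \<in> carrier_mat (Suc d) (Suc d) \<longrightarrow> transpose_mat G = G \<longrightarrow> det G \<le> D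
             \<longrightarrow> minb G (Suc d) m \<longrightarrow> (\<exists>U\<in>GL_int (Suc d). \<forall>k<Suc d. qf G (col (rM U) k) \<le> C)"
proof -
  have m2: "m/2 > 0" using m by simp
  obtain C1 where C1': "\<forall>H. H \<in> carrier_mat d d \<longrightarrow> transpose_mat H = H \<longrightarrow> det H \<le> max D 0 / m
             \<longrightarrow> minb H d (m/2) \<longrightarrow> (\<exists>U\<in>GL_int d. \<forall>k<d. qf H (col (rM U) k) \<le> C1)"
    using IH m2 by blast
  have C1: "\<exists>U\<in>GL_int d. \<forall>k<d. qf H (col (rM U) k) \<le> C1"
    if "H \<in> carrier_mat d d" "transpose_mat H = H" "det H \<le> max D 0 / m" "minb H d (m/2)" for H
    using C1' that by blast
  show ?thesis
  proof (intro exI[of _ "4 * C1"] allI impI)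
    fix G assume G: "G \<in> carrier_mat (Suc d) (Suc d)" and sym: "transpose_mat G = G"
      and dG: "det G \<le> D" and mb: "minb G (Suc d) m"
    define S where "S = {qf G (rI x) | x. x \<in> carrier_vec (Suc d) \<and> x \<noteq> 0\<^sub>v (Suc d)}"
    define s where "s = Inf S"
    have e0: "unit_vec (Suc d) 0 \<in> carrier_vec (Suc d) \<and> (unit_vec (Suc d) 0 :: int vec) \<noteq> 0\<^sub>v (Suc d)"
      by (auto simp: unit_vec_def vec_eq_iff)
    have Sne: "S \<noteq> {}" unfolding S_def using e0 by blast
    have Slow: "\<And>y. y \<in> S \<Longrightarrow> m \<le> y" using mb unfolding S_def minb_def by auto
    have Sbdd: "bdd_below S" unfolding bdd_below_def using Slow by blast
    have sm: "m \<le> s" unfolding s_def using Sne Slow by (rule cInf_greatest)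
    have s_le: "s \<le> qf G (rI x)" if "x \<in> carrier_vec (Suc d)" "x \<noteq> 0\<^sub>v (Suc d)" for x
      unfolding s_def using that Sbdd by (intro cInf_lower) (auto simp: S_def)
    obtain x where x: "x \<in> carrier_vec (Suc d)" "x \<noteq> 0\<^sub>v (Suc d)" and xlt: "qf G (rI x) < 2 * s"
    proof -
      have "Inf S < 2 * s" using sm m unfolding s_def by linarith
      then obtain y where yS: "y \<in> S" and ylt: "y < 2 * s" using cInf_lessD[OF Sne] by blast
      from yS obtain x where "x \<in> carrier_vec (Suc d)" "x \<noteq> 0\<^sub>v (Suc d)" "y = qf G (rI x)"
        unfolding S_def by blast
      thus ?thesis using that ylt by blast
    qed
    obtain V k where V: "V \<in> GL_int (Suc d)" and xk: "x = k \<cdot>\<^sub>v col V 0"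
      using primitive_col[OF x] by blast
    have Vc: "V \<in> carrier_mat (Suc d) (Suc d)" using V unfolding GL_int_def by auto
    have rVc: "rM V \<in> carrier_mat (Suc d) (Suc d)" using Vc by simp
    have cV: "col V 0 \<in> carrier_vec (Suc d)" using Vc by (intro carrier_vecI) simp
    have colV0: "col V 0 = V *\<^sub>v unit_vec (Suc d) 0"
    proof (rule eq_vecI)
      fix i assume "i < dim_vec (V *\<^sub>v unit_vec (Suc d) 0)"
      hence i: "i < Suc d" using Vc by simp
      have "row V i \<in> carrier_vec (Suc d)" using Vc by (intro carrier_vecI) simp
      thus "col V 0 $ i = (V *\<^sub>v unit_vec (Suc d) 0) $ i" using i Vc by simp
    qed (use Vc in simp)
    have cVnz: "col V 0 \<noteq> 0\<^sub>v (Suc d)" unfolding colV0 using GL_nonzero[OF V] e0 by blast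
    have k0: "k \<noteq> 0"
    proof
      assume "k = 0"
      with xk cV Vc have "x = 0\<^sub>v (Suc d)" by (auto intro!: eq_vecI)
      with x(2) show False by blast
    qed
    define G' where "G' = transpose_mat (rM V) * G * rM V"
    define a where "a = G' $$ (0,0)"
    have G'c: "G' \<in> carrier_mat (Suc d) (Suc d)" unfolding G'_def using G Vc by simp
    have a_eq: "a = qf G (rI (col V 0))"
      unfolding a_def G'_def using qf_diag[OF rVc G, of 0] Vc by (simp add: col_map_mat)
    have am: "m \<le> a" using mb cV cVnz unfolding a_eq minb_def by auto
    have apos: "a > 0" using am m by simp
    have "a \<le> qf G (rI x)"
    proof -
      have "qf G (rI x) = (real_of_int k)^2 * a"
        unfolding xk rI_smult a_eq using qf_smult[OF G, of "rI (col V 0)"] cV by simp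
      moreover have "(real_of_int k)^2 \<ge> 1"
      proof -
        have "1 \<le> \<bar>k\<bar>" using k0 by linarith
        hence "1 \<le> \<bar>real_of_int k\<bar>" by linarith
        hence "1 \<le> \<bar>real_of_int k\<bar>^2" by (rule one_le_power)
        thus ?thesis by simp
      qed
      ultimately show ?thesis using apos by (simp add: mult_le_cancel_right1)
    qed
    hence a2s: "a < 2 * s" using xlt by simp
    have G'sym: "transpose_mat G' = G'"
    proof -
      have X: "transpose_mat (rM V) * G \<in> carrier_mat (Suc d) (Suc d)" using G Vc by simp
      have "transpose_mat G' = transpose_mat (rM V) * transpose_mat (transpose_mat (rM V) * G)"
        unfolding G'_def by (rule transpose_mult[OF X rVc])
      also have "transpose_mat (transpose_mat (rM V) * G) = transpose_mat G * rM V"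
        using transpose_mult[of "transpose_mat (rM V)" "Suc d" "Suc d" G "Suc d"] G rVc by simp
      also have "transpose_mat (rM V) * (transpose_mat G * rM V) = G'"
        unfolding G'_def sym using G rVc by (simp add: assoc_mult_mat[of _ "Suc d" "Suc d" _ "Suc d" _ "Suc d"])
      finally show ?thesis .
    qed
    have G'low: "s \<le> qf G' (rI z)" if z: "z \<in> carrier_vec (Suc d)" "z \<noteq> 0\<^sub>v (Suc d)" for z
    proof -
      have "qf G' (rI z) = qf G (rM V *\<^sub>v rI z)"
        unfolding G'_def using qf_transport[OF rVc G, of "rI z"] z by simp
      also have "rM V *\<^sub>v rI z = rI (V *\<^sub>v z)"
        by (metis of_int_hom.mult_mat_vec_hom Vc z(1))
      finally show ?thesis using s_le[of "V *\<^sub>v z"] GL_nonzero[OF V z] Vc z by simp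
    qed
    have detG': "det G' = det G"
    proof -
      have "det (rM V) * det (rM V) = 1" using V unfolding GL_int_def by auto
      moreover have "det G' = det (transpose_mat (rM V) * G) * det (rM V)"
        unfolding G'_def by (rule det_mult) (use G Vc in auto)
      moreover have "det (transpose_mat (rM V) * G) = det (transpose_mat (rM V)) * det G"
        by (rule det_mult) (use G Vc in auto)
      moreover have "det (transpose_mat (rM V)) = det (rM V)"
        by (rule det_transpose) (use Vc in auto)
      ultimately show ?thesis by (simp add: algebra_simps)
    qed
    define H where "H = schur G' d"
    have Hc: "H \<in> carrier_mat d d" unfolding H_def by (rule schur_carrier)
    have Hsym: "transpose_mat H = H" unfolding H_def by (rule schur_sym[OF G'c G'sym])
    have dec: "qf G' (vCons t y) = a * (t + (gv G' d \<bullet> y) / a)^2 + qf H y"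
      if "y \<in> carrier_vec d" for t y
      unfolding a_def H_def using qf_vCons_schur[OF G'c G'sym that] apos a_def by simp
    have Hmin: "minb H d (m/2)"
      unfolding minb_def
    proof (intro allI impI)
      fix y :: "int vec" assume y: "y \<in> carrier_vec d" "y \<noteq> 0\<^sub>v d"
      define t where "t = round (- (gv G' d \<bullet> rI y) / a)"
      have zc: "vCons t y \<in> carrier_vec (Suc d)" using y by simp
      have znz: "vCons t y \<noteq> 0\<^sub>v (Suc d)"
      proof
        assume "vCons t y = 0\<^sub>v (Suc d)"
        hence "\<forall>i<d. y $ i = 0"
        proof (intro allI impI)
          fix i assume e: "vCons t y = 0\<^sub>v (Suc d)" and i: "i < d"
          have "vCons t y $ Suc i = 0" unfolding e using i by simp
          thus "y $ i = 0" by simp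
        qed
        hence "y = 0\<^sub>v d" using y by (intro eq_vecI) auto
        with y show False by simp
      qed
      have r: "\<bar>real_of_int t + (gv G' d \<bullet> rI y) / a\<bar> \<le> 1/2"
        unfolding t_def using of_int_round_abs_le[of "- (gv G' d \<bullet> rI y) / a"] by simp
      have sq: "(real_of_int t + (gv G' d \<bullet> rI y) / a)^2 \<le> 1/4"
      proof -
        have "(real_of_int t + (gv G' d \<bullet> rI y) / a)^2 = \<bar>real_of_int t + (gv G' d \<bullet> rI y) / a\<bar>^2"
          by simp
        also have "\<dots> \<le> (1/2)^2" using r by (intro power_mono) auto
        also have "(1/2::real)^2 = 1/4" by (simp add: power2_eq_square)
        finally show ?thesis .
      qed
      have "s \<le> qf G' (rI (vCons t y))" using G'low[OF zc znz] .
      also have "\<dots> = a * (real_of_int t + (gv G' d \<bullet> rI y) / a)^2 + qf H (rI y)"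
        unfolding rI_vCons using dec[of "rI y"] y by simp
      also have "\<dots> \<le> a / 4 + qf H (rI y)" using sq apos
        by (simp add: mult_left_mono[of _ "1/4" a, simplified])
      finally show "m / 2 \<le> qf H (rI y)" using a2s sm by simp
    qed
    have Hdet: "det H \<le> max D 0 / m"
    proof -
      have "det G' = a * det H" unfolding H_def a_def using det_schur[OF G'c G'sym] apos a_def by simp
      hence "det H = det G / a" using detG' apos by simp
      also have "\<dots> \<le> max D 0 / a" using dG apos by (simp add: divide_right_mono)
      also have "\<dots> \<le> max D 0 / m" using am m by (simp add: frac_le)
      finally show ?thesis .
    qed
    obtain V' where V': "V' \<in> GL_int d" and V'b: "\<And>j. j < d \<Longrightarrow> qf H (col (rM V') j) \<le> C1"
      using C1[OF Hc Hsym Hdet Hmin] by blast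
    have V'c: "V' \<in> carrier_mat d d" using V' unfolding GL_int_def by auto
    define w where "w j = round (- (gv G' d \<bullet> col (rM V') j) / a)" for j
    define W :: "int mat" where "W = four_block_mat (1\<^sub>m 1) (mat 1 d (\<lambda>(_,j). w j)) (0\<^sub>m d 1) V'"
    have Wc: "W \<in> carrier_mat (Suc d) (Suc d)" unfolding W_def using V'c by auto
    have "det W = det (1\<^sub>m 1 :: int mat) * det V'"
      unfolding W_def by (rule det_four_block_mat_lower_left_zero_col) (use V'c in auto)
    hence WGL: "W \<in> GL_int (Suc d)" using V' Wc unfolding GL_int_def by simp
    have Widx: "W $$ (i,j) = (if i = 0 then (if j = 0 then 1 else w (j-1)) else (if j = 0 then 0 else V' $$ (i-1, j-1)))"
      if "i < Suc d" "j < Suc d" for i j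
      using that V'c unfolding W_def four_block_mat_def by (auto simp: Let_def)
    have colW0: "col (rM W) 0 = vCons 1 (0\<^sub>v d)"
    proof (rule eq_vecI)
      fix i assume "i < dim_vec (vCons 1 (0\<^sub>v d) :: real vec)"
      hence i: "i < Suc d" by simp
      show "col (rM W) 0 $ i = vCons 1 (0\<^sub>v d) $ i"
        using i Wc Widx[OF i, of 0] by (simp add: vec_index_vCons)
    qed (use Wc in simp)
    have colWS: "col (rM W) (Suc j) = vCons (real_of_int (w j)) (col (rM V') j)" if j: "j < d" for j
    proof (rule eq_vecI)
      fix i assume "i < dim_vec (vCons (real_of_int (w j)) (col (rM V') j))"
      hence i: "i < Suc d" using V'c by simp
      have js: "Suc j < Suc d" using j by simp
      show "col (rM W) (Suc j) $ i = vCons (real_of_int (w j)) (col (rM V') j) $ i"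
        using i j Wc V'c Widx[OF i js] by (simp add: vec_index_vCons)
    qed (use Wc V'c in simp)
    have boundS: "qf G' (col (rM W) (Suc j)) \<le> a / 4 + C1" if j: "j < d" for j
    proof -
      have r: "\<bar>real_of_int (w j) + (gv G' d \<bullet> col (rM V') j) / a\<bar> \<le> 1/2"
        unfolding w_def using of_int_round_abs_le[of "- (gv G' d \<bullet> col (rM V') j) / a"] by simp
      have sq: "(real_of_int (w j) + (gv G' d \<bullet> col (rM V') j) / a)^2 \<le> 1/4"
      proof -
        have "(real_of_int (w j) + (gv G' d \<bullet> col (rM V') j) / a)^2 = \<bar>real_of_int (w j) + (gv G' d \<bullet> col (rM V') j) / a\<bar>^2"
          by simp
        also have "\<dots> \<le> (1/2)^2" using r by (intro power_mono) auto
        also have "(1/2::real)^2 = 1/4" by (simp add: power2_eq_square)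
        finally show ?thesis .
      qed
      have "qf G' (col (rM W) (Suc j)) = a * (real_of_int (w j) + (gv G' d \<bullet> col (rM V') j) / a)^2 + qf H (col (rM V') j)"
        unfolding colWS[OF j] using dec[of "col (rM V') j"] V'c j by simp
      also have "\<dots> \<le> a / 4 + C1"
      proof -
        have "a * (real_of_int (w j) + (gv G' d \<bullet> col (rM V') j) / a)^2 \<le> a * (1/4)"
          by (rule mult_left_mono) (use sq apos in auto)
        thus ?thesis using V'b[OF j] by simp
      qed
      finally show ?thesis .
    qed
    have a_lt: "a < 4 * C1"
    proof -
      have c1: "col W 1 = W *\<^sub>v unit_vec (Suc d) 1"
      proof (rule eq_vecI)
        fix i assume "i < dim_vec (W *\<^sub>v unit_vec (Suc d) 1)"
        hence i: "i < Suc d" using Wc by simp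
        have "row W i \<in> carrier_vec (Suc d)" using Wc by (intro carrier_vecI) simp
        thus "col W 1 $ i = (W *\<^sub>v unit_vec (Suc d) 1) $ i" using i Wc d by simp
      qed (use Wc in simp)
      have u1: "unit_vec (Suc d) 1 \<in> carrier_vec (Suc d) \<and> (unit_vec (Suc d) 1 :: int vec) \<noteq> 0\<^sub>v (Suc d)"
        using d by (auto simp: unit_vec_def vec_eq_iff)
      have nz: "col W 1 \<noteq> 0\<^sub>v (Suc d)" unfolding c1 using GL_nonzero[OF WGL] u1 by blast
      have cW1: "col W 1 \<in> carrier_vec (Suc d)" using Wc by (intro carrier_vecI) simp
      have "s \<le> qf G' (rI (col W 1))" using G'low[OF cW1 nz] .
      also have "rI (col W 1) = col (rM W) (Suc 0)" using Wc d by (simp add: col_map_mat)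
      finally have "s \<le> qf G' (col (rM W) (Suc 0))" .
      also have "\<dots> \<le> a / 4 + C1" using boundS[of 0] d by simp
      finally show ?thesis using a2s by simp
    qed
    define U where "U = V * W"
    have UGL: "U \<in> GL_int (Suc d)" unfolding U_def using GL_mult[OF V WGL] .
    show "\<exists>U\<in>GL_int (Suc d). \<forall>k<Suc d. qf G (col (rM U) k) \<le> 4 * C1"
    proof (intro bexI[OF _ UGL] allI impI)
      fix k assume k: "k < Suc d"
      have e: "rM U = rM V * rM W" unfolding U_def by (rule of_int_hom.mat_hom_mult[OF Vc Wc])
      have "col (rM U) k = rM V *\<^sub>v col (rM W) k"
        unfolding e by (rule col_mult2) (use Vc Wc k in auto)
      hence "qf G (col (rM U) k) = qf G' (col (rM W) k)"
        unfolding G'_def using qf_transport[OF rVc G, of "col (rM W) k"] Wc k by simp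
      also have "\<dots> \<le> 4 * C1"
      proof (cases k)
        case 0
        have "qf G' (col (rM W) k) = a" unfolding 0 colW0 using dec[of "0\<^sub>v d" 1] qf_zero[OF Hc] by (simp add: gv_def scalar_prod_def)
        thus ?thesis using a_lt by simp
      next
        case (Suc j)
        thus ?thesis using boundS[of j] k a_lt apos by simp
      qed
      finally show "qf G (col (rM U) k) \<le> 4 * C1" .
    qed
  qed
qed

lemma reduction:
  "d > 0 \<Longrightarrow> \<forall>m>0. \<forall>D. \<exists>C. \<forall>G. G \<in> carrier_mat d d \<longrightarrow> transpose_mat G = G \<longrightarrow> det G \<le> D
             \<longrightarrow> minb G d m \<longrightarrow> (\<exists>U\<in>GL_int d. \<forall>k<d. qf G (col (rM U) k) \<le> C)"
proof (induction d)
  case 0 then show ?case by simp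
next
  case (Suc d)
  show ?case
  proof (cases "d = 0")
    case True
    show ?thesis
    proof (intro allI impI)
      fix m D :: real
      show "\<exists>C. \<forall>G. G \<in> carrier_mat (Suc d) (Suc d) \<longrightarrow> transpose_mat G = G \<longrightarrow> det G \<le> D
             \<longrightarrow> minb G (Suc d) m \<longrightarrow> (\<exists>U\<in>GL_int (Suc d). \<forall>k<Suc d. qf G (col (rM U) k) \<le> C)"
      proof (intro exI[of _ D] allI impI)
        fix G assume G: "G \<in> carrier_mat (Suc d) (Suc d)" and "det G \<le> D"
        then show "\<exists>U\<in>GL_int (Suc d). \<forall>k<Suc d. qf G (col (rM U) k) \<le> D"
          using reduction_base[of G] True by force
      qed
    qed
  next
    case False
    hence d: "d > 0" by simp
    show ?thesis using reduction_step[OF d Suc.IH[OF d]] by blast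
  qed
qed

definition BQ :: "nat \<Rightarrow> (nat \<Rightarrow> real) \<Rightarrow> real \<Rightarrow> real mat" where
  "BQ n \<alpha> Q = mat (Suc n) (Suc n) (\<lambda>(i,j). if i < n then (if i = j then 1/Q else 0)
      else (if j < n then Q^n * \<alpha> j else Q^n))"

definition GQ :: "nat \<Rightarrow> (nat \<Rightarrow> real) \<Rightarrow> real \<Rightarrow> real mat" where
  "GQ n \<alpha> Q = transpose_mat (BQ n \<alpha> Q) * BQ n \<alpha> Q"

lemma BQ_carrier: "BQ n \<alpha> Q \<in> carrier_mat (Suc n) (Suc n)" unfolding BQ_def by simp
lemma GQ_carrier: "GQ n \<alpha> Q \<in> carrier_mat (Suc n) (Suc n)"
  unfolding GQ_def using BQ_carrier[of n \<alpha> Q] by (metis mult_carrier_mat transpose_carrier_mat)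

lemma GQ_sym: "transpose_mat (GQ n \<alpha> Q) = GQ n \<alpha> Q"
  unfolding GQ_def using transpose_mult[OF _ BQ_carrier, of "transpose_mat (BQ n \<alpha> Q)" "Suc n"] BQ_carrier
  by simp

lemma BQ_vec:
  assumes v: "v \<in> carrier_vec (Suc n)" and i: "i < Suc n"
  shows "(BQ n \<alpha> Q *\<^sub>v v) $ i = (if i < n then v$i / Q else Q^n * ((\<Sum>j<n. \<alpha> j * v$j) + v$n))"
proof (cases "i < n")
  case True
  have "(BQ n \<alpha> Q *\<^sub>v v) $ i = (\<Sum>j = 0..<Suc n. BQ n \<alpha> Q $$ (i,j) * v$j)"
    using v i BQ_carrier[of n \<alpha> Q] by (simp add: scalar_prod_def)
  also have "\<dots> = (\<Sum>j = 0..<Suc n. (if j = i then v$j / Q else 0))"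
    by (rule sum.cong) (use True in \<open>auto simp: BQ_def\<close>)
  also have "\<dots> = v$i / Q" using i by (simp add: sum.delta)
  finally show ?thesis using True by simp
next
  case False
  hence iN: "i = n" using i by simp
  have "(BQ n \<alpha> Q *\<^sub>v v) $ i = (\<Sum>j = 0..<Suc n. BQ n \<alpha> Q $$ (i,j) * v$j)"
    using v i BQ_carrier[of n \<alpha> Q] by (simp add: scalar_prod_def)
  also have "\<dots> = (\<Sum>j = 0..<Suc n. (if j < n then Q^n * \<alpha> j else Q^n) * v$j)"
    by (rule sum.cong) (use iN in \<open>auto simp: BQ_def\<close>)
  also have "\<dots> = (\<Sum>j = 0..<n. Q^n * \<alpha> j * v$j) + Q^n * v$n"
    by (simp add: sum.atLeast0_lessThan_Suc)
  also have "\<dots> = Q^n * ((\<Sum>j<n. \<alpha> j * v$j) + v$n)"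
    by (simp add: sum_distrib_left algebra_simps atLeast0LessThan)
  finally show ?thesis using iN by simp
qed

lemma qf_GQ:
  assumes v: "v \<in> carrier_vec (Suc n)"
  shows "qf (GQ n \<alpha> Q) v = (\<Sum>i<n. (v$i / Q)^2) + (Q^n * ((\<Sum>j<n. \<alpha> j * v$j) + v$n))^2"
proof -
  let ?B = "BQ n \<alpha> Q"
  have "GQ n \<alpha> Q = transpose_mat ?B * 1\<^sub>m (Suc n) * ?B"
  proof -
    have "transpose_mat ?B * 1\<^sub>m (Suc n) = transpose_mat ?B"
      by (rule right_mult_one_mat) (use BQ_carrier in simp)
    thus ?thesis unfolding GQ_def by simp
  qed
  hence "qf (GQ n \<alpha> Q) v = qf (1\<^sub>m (Suc n)) (?B *\<^sub>v v)"
    using qf_transport[OF BQ_carrier one_carrier_mat v] by simp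
  also have "\<dots> = (\<Sum>i = 0..<Suc n. ((?B *\<^sub>v v) $ i)^2)"
  proof -
    have "1\<^sub>m (Suc n) *\<^sub>v (?B *\<^sub>v v) = ?B *\<^sub>v v"
      by (rule one_mult_mat_vec) (rule mult_mat_vec_carrier[OF BQ_carrier v])
    thus ?thesis unfolding qf_def using BQ_carrier[of n \<alpha> Q]
      by (simp add: scalar_prod_def power2_eq_square)
  qed
  also have "\<dots> = (\<Sum>i = 0..<Suc n. (if i < n then v$i / Q else Q^n * ((\<Sum>j<n. \<alpha> j * v$j) + v$n))^2)"
    using BQ_vec[OF v] by (intro sum.cong) auto
  also have "\<dots> = (\<Sum>i<n. (v$i / Q)^2) + (Q^n * ((\<Sum>j<n. \<alpha> j * v$j) + v$n))^2"
    by (simp add: sum.atLeast0_lessThan_Suc atLeast0LessThan)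
  finally show ?thesis .
qed

lemma det_GQ:
  assumes Q: "Q > 0"
  shows "det (GQ n \<alpha> Q) = 1"
proof -
  let ?B = "BQ n \<alpha> Q"
  have dB: "det ?B = 1"
  proof -
    have "det ?B = prod_list (diag_mat ?B)"
      by (rule det_lower_triangular[OF _ BQ_carrier]) (auto simp: BQ_def)
    also have "diag_mat ?B = map (\<lambda>_. 1/Q) [0..<n] @ [Q^n]"
      unfolding diag_mat_def BQ_def by auto
    finally show ?thesis using Q by (simp add: map_replicate_const power_one_over)
  qed
  have "det (GQ n \<alpha> Q) = det (transpose_mat ?B) * det ?B"
    unfolding GQ_def by (rule det_mult) (use BQ_carrier in auto)
  also have "det (transpose_mat ?B) = det ?B" by (rule det_transpose[OF BQ_carrier])
  finally show ?thesis using dB by simp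
qed

lemma sup_norm_props:
  assumes i: "i < n"
  shows "real_of_int \<bar>q i\<bar> \<le> int_vec_sup_norm n q"
    and "\<exists>i0<n. int_vec_sup_norm n q = real_of_int \<bar>q i0\<bar>"
proof -
  have fin: "finite ((\<lambda>i. real_of_int \<bar>q i\<bar>) ` {..<n})" by simp
  have ne: "(\<lambda>i. real_of_int \<bar>q i\<bar>) ` {..<n} \<noteq> {}" using i by auto
  show "real_of_int \<bar>q i\<bar> \<le> int_vec_sup_norm n q"
    unfolding int_vec_sup_norm_def using i fin by (intro Max_ge) auto
  have "Max ((\<lambda>i. real_of_int \<bar>q i\<bar>) ` {..<n}) \<in> (\<lambda>i. real_of_int \<bar>q i\<bar>) ` {..<n}"
    using Max_in[OF fin ne] .
  thus "\<exists>i0<n. int_vec_sup_norm n q = real_of_int \<bar>q i0\<bar>"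
    unfolding int_vec_sup_norm_def by auto
qed

lemma GQ_minb:
  assumes Q: "Q \<ge> 1" and c0: "c0 > 0"
    and BA: "\<forall>q. (\<exists>i<n. q i \<noteq> 0) \<longrightarrow> dist_int (lin_form n \<alpha> q) \<ge> c0 * int_vec_sup_norm n q powr (- real n)"
  shows "minb (GQ n \<alpha> Q) (Suc n) (min 1 (c0^2))"
  unfolding minb_def
proof (intro allI impI)
  fix x :: "int vec" assume x: "x \<in> carrier_vec (Suc n)" and xnz: "x \<noteq> 0\<^sub>v (Suc n)"
  define q where "q i = x $ i" for i
  define L where "L = lin_form n \<alpha> q"
  define l where "l = L + real_of_int (x$n)"
  have rx: "rI x \<in> carrier_vec (Suc n)" using x by simp
  have Lsum: "(\<Sum>j<n. \<alpha> j * rI x $ j) = L"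
    unfolding L_def lin_form_def q_def using x by (intro sum.cong) auto
  have qfx: "qf (GQ n \<alpha> Q) (rI x) = (\<Sum>i<n. (real_of_int (x$i) / Q)^2) + (Q^n * l)^2"
  proof -
    have "(\<Sum>i<n. (rI x $ i / Q)^2) = (\<Sum>i<n. (real_of_int (x$i) / Q)^2)"
      using x by (intro sum.cong) auto
    moreover have "rI x $ n = real_of_int (x$n)" using x by simp
    ultimately show ?thesis unfolding qf_GQ[OF rx] Lsum l_def by simp
  qed
  have Qpos: "Q > 0" using Q by simp
  have Qn: "Q^n \<ge> 1" using Q by (simp add: one_le_power)
  have S0: "(\<Sum>i<n. (real_of_int (x$i) / Q)^2) \<ge> 0" by (intro sum_nonneg) auto
  show "min 1 (c0^2) \<le> qf (GQ n \<alpha> Q) (rI x)"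
  proof (cases "\<exists>i<n. q i \<noteq> 0")
    case False
    hence L0: "L = 0" unfolding L_def lin_form_def by auto
    have "x $ n \<noteq> 0"
    proof
      assume "x $ n = 0"
      have "x = 0\<^sub>v (Suc n)"
      proof (rule eq_vecI)
        fix j assume "j < dim_vec (0\<^sub>v (Suc n) :: int vec)"
        hence "j < n \<or> j = n" by auto
        thus "x $ j = 0\<^sub>v (Suc n) $ j" using False \<open>x $ n = 0\<close> unfolding q_def by auto
      qed (use x in simp)
      with xnz show False by simp
    qed
    hence l1: "\<bar>l\<bar> \<ge> 1" unfolding l_def L0 by simp
    have "1 * 1 \<le> Q^n * \<bar>l\<bar>" by (rule mult_mono) (use Qn l1 in auto)
    hence "1 \<le> \<bar>Q^n * l\<bar>" using Qpos by (simp add: abs_mult)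
    hence "1 \<le> \<bar>Q^n * l\<bar>^2" by (rule one_le_power)
    hence "(Q^n * l)^2 \<ge> 1" by simp
    thus ?thesis unfolding qfx using S0 by linarith
  next
    case True
    then obtain i where i: "i < n" "q i \<noteq> 0" by blast
    define N where "N = int_vec_sup_norm n q"
    have Ni: "real_of_int \<bar>q i\<bar> \<le> N" unfolding N_def by (rule sup_norm_props(1)[OF i(1)])
    have N1: "N \<ge> 1" using Ni i(2) by linarith
    obtain i0 where i0: "i0 < n" "N = real_of_int \<bar>q i0\<bar>"
      using sup_norm_props(2)[OF i(1)] unfolding N_def by blast
    have dl: "\<bar>l\<bar> \<ge> c0 / N^n"
    proof -
      have "c0 / N^n = c0 * N powr (- real n)"
        using N1 by (simp add: powr_minus powr_realpow divide_inverse)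
      also have "\<dots> \<le> dist_int L" using BA True unfolding L_def N_def by blast
      also have "\<dots> \<le> \<bar>L - real_of_int (- x$n)\<bar>" unfolding dist_int_def by (rule round_diff_minimal)
      also have "\<dots> = \<bar>l\<bar>" unfolding l_def by simp
      finally show ?thesis .
    qed
    have Si0: "(\<Sum>i<n. (real_of_int (x$i) / Q)^2) \<ge> (N / Q)^2"
    proof -
      have "(N / Q)^2 = (real_of_int (x$i0) / Q)^2" using i0 unfolding q_def
        by (simp add: power_divide)
      also have "\<dots> \<le> (\<Sum>i<n. (real_of_int (x$i) / Q)^2)"
        using i0(1) by (intro member_le_sum) auto
      finally show ?thesis .
    qed
    show ?thesis
    proof (cases "N \<ge> Q")
      case True
      have "N / Q \<ge> 1" using True Qpos by simp
      hence "(N / Q)^2 \<ge> 1" by (simp add: one_le_power)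
      hence "qf (GQ n \<alpha> Q) (rI x) \<ge> 1" unfolding qfx using Si0 by (smt (verit) zero_le_power2)
      thus ?thesis by simp
    next
      case False
      have "Q^n \<ge> N^n" using False N1 by (intro power_mono) auto
      have "c0 = N^n * (c0 / N^n)" using N1 by simp
      also have "\<dots> \<le> Q^n * (c0 / N^n)"
        using \<open>Q^n \<ge> N^n\<close> c0 N1 by (intro mult_right_mono) auto
      also have "\<dots> \<le> Q^n * \<bar>l\<bar>" using dl Qpos by (intro mult_left_mono) auto
      also have "\<dots> = \<bar>Q^n * l\<bar>" using Qpos by (simp add: abs_mult)
      finally have "c0 \<le> \<bar>Q^n * l\<bar>" .
      hence "c0^2 \<le> \<bar>Q^n * l\<bar>^2" using c0 by (intro power_mono) auto
      hence "c0^2 \<le> (Q^n * l)^2" by simp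
      hence "qf (GQ n \<alpha> Q) (rI x) \<ge> c0^2" unfolding qfx using S0 by linarith
      thus ?thesis by simp
    qed
  qed
qed

lemma rvsn_le:
  assumes "b \<ge> 0" "\<And>i. i < dim_vec v \<Longrightarrow> \<bar>v$i\<bar> \<le> b"
  shows "real_vec_sup_norm v \<le> b"
  unfolding real_vec_sup_norm_def using assms by (subst Max_le_iff) auto

lemma rvsn_ge:
  assumes "i < dim_vec v"
  shows "\<bar>v$i\<bar> \<le> real_vec_sup_norm v"
  unfolding real_vec_sup_norm_def using assms by (intro Max_ge) auto

lemma msn_finite: "finite ({real_of_int \<bar>A $$ (i,j)\<bar> | i j. i < dim_row A \<and> j < dim_col A} \<union> {0})"
proof -
  have "finite {real_of_int \<bar>A $$ (i,j)\<bar> | i j. i < dim_row A \<and> j < dim_col A}"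
    by (rule finite_image_set2) auto
  thus ?thesis by simp
qed

lemma msn_le:
  assumes "b \<ge> 0" "\<And>i j. i < dim_row A \<Longrightarrow> j < dim_col A \<Longrightarrow> real_of_int \<bar>A $$ (i,j)\<bar> \<le> b"
  shows "mat_sup_norm A \<le> b"
  unfolding mat_sup_norm_def using assms msn_finite[of A] by (subst Max_le_iff) auto

lemma msn_ge:
  assumes "i < dim_row A" "j < dim_col A"
  shows "real_of_int \<bar>A $$ (i,j)\<bar> \<le> mat_sup_norm A"
  unfolding mat_sup_norm_def using assms msn_finite[of A] by (intro Max_ge) auto

lemma ext_carrier: "ext_vec n \<alpha> \<in> carrier_vec (Suc n)" unfolding ext_vec_def by simp

lemma Aext_pos:
  assumes A: "A \<in> GL_int (Suc n)"
  shows "0 < real_vec_sup_norm (rM A *\<^sub>v ext_vec n \<alpha>)"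
proof -
  have Ac: "A \<in> carrier_mat (Suc n) (Suc n)" and dA: "det A \<noteq> 0" using A unfolding GL_int_def by auto
  have rAc: "rM A \<in> carrier_mat (Suc n) (Suc n)" using Ac by simp
  have "det (rM A) \<noteq> 0" using dA by simp
  moreover have "ext_vec n \<alpha> \<noteq> 0\<^sub>v (Suc n)"
  proof
    assume "ext_vec n \<alpha> = 0\<^sub>v (Suc n)"
    hence "ext_vec n \<alpha> $ n = 0" by simp
    thus False unfolding ext_vec_def by simp
  qed
  ultimately have nz: "rM A *\<^sub>v ext_vec n \<alpha> \<noteq> 0\<^sub>v (Suc n)"
    using det_0_iff_vec_prod_zero[OF rAc] ext_carrier[of n \<alpha>] by blast
  obtain i where i: "i < Suc n" "(rM A *\<^sub>v ext_vec n \<alpha>) $ i \<noteq> 0"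
  proof -
    { assume "\<forall>i<Suc n. (rM A *\<^sub>v ext_vec n \<alpha>) $ i = 0"
      hence "rM A *\<^sub>v ext_vec n \<alpha> = 0\<^sub>v (Suc n)" using rAc by (intro eq_vecI) auto
      with nz have False by simp }
    thus ?thesis using that by blast
  qed
  have "0 < \<bar>(rM A *\<^sub>v ext_vec n \<alpha>) $ i\<bar>" using i by simp
  also have "\<dots> \<le> real_vec_sup_norm (rM A *\<^sub>v ext_vec n \<alpha>)" by (rule rvsn_ge) (use i rAc in simp)
  finally show ?thesis .
qed

lemma sq_le_sqrt: "x^2 \<le> (C::real) \<Longrightarrow> \<bar>x\<bar> \<le> sqrt C"
  by (metis real_sqrt_abs real_sqrt_le_mono)

lemma approx:
  assumes Q: "Q \<ge> 1" and C: "C \<ge> 1" and U: "U \<in> GL_int (Suc n)"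
    and bnd: "\<forall>k<Suc n. qf (GQ n \<alpha> Q) (col (rM U) k) \<le> C"
  shows "real_vec_sup_norm (rM (transpose_mat U) *\<^sub>v ext_vec n \<alpha>) \<le> sqrt C / Q^n"
    and "mat_sup_norm (transpose_mat U) \<le> sqrt C * (1 + (\<Sum>j<n. \<bar>\<alpha> j\<bar>)) * Q"
    and "1 \<le> mat_sup_norm (transpose_mat U)"
proof -
  have Uc: "U \<in> carrier_mat (Suc n) (Suc n)" using U unfolding GL_int_def by auto
  have Qpos: "Q > 0" using Q by simp
  have Qn: "Q^n \<ge> 1" using Q by (simp add: one_le_power)
  have sC: "sqrt C \<ge> 1" using C by simp
  define l where "l k = (\<Sum>j<n. \<alpha> j * real_of_int (U$$(j,k))) + real_of_int (U$$(n,k))" for k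
  have qfk: "(\<Sum>i<n. (real_of_int (U$$(i,k)) / Q)^2) + (Q^n * l k)^2 \<le> C" if k: "k < Suc n" for k
  proof -
    have cc: "col (rM U) k \<in> carrier_vec (Suc n)" using Uc k by (intro carrier_vecI) simp
    have ent: "col (rM U) k $ i = real_of_int (U$$(i,k))" if "i < Suc n" for i
      using that k Uc by simp
    have "qf (GQ n \<alpha> Q) (col (rM U) k) = (\<Sum>i<n. (real_of_int (U$$(i,k)) / Q)^2) + (Q^n * l k)^2"
    proof -
      have "(\<Sum>i<n. (col (rM U) k $ i / Q)^2) = (\<Sum>i<n. (real_of_int (U$$(i,k)) / Q)^2)"
        using ent by (intro sum.cong) auto
      moreover have "(\<Sum>j<n. \<alpha> j * col (rM U) k $ j) = (\<Sum>j<n. \<alpha> j * real_of_int (U$$(j,k)))"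
        using ent by (intro sum.cong) auto
      ultimately show ?thesis unfolding qf_GQ[OF cc] l_def using ent[of n] by simp
    qed
    moreover have "qf (GQ n \<alpha> Q) (col (rM U) k) \<le> C" using bnd k by blast
    ultimately show ?thesis by linarith
  qed
  have lk: "\<bar>l k\<bar> \<le> sqrt C / Q^n" if k: "k < Suc n" for k
  proof -
    have "(Q^n * l k)^2 \<le> C" using qfk[OF k] sum_nonneg[of "{..<n}" "\<lambda>i. (real_of_int (U$$(i,k)) / Q)^2"]
      by (smt (verit) zero_le_power2)
    hence "\<bar>Q^n * l k\<bar> \<le> sqrt C" by (rule sq_le_sqrt)
    hence "Q^n * \<bar>l k\<bar> \<le> sqrt C" using Qpos by (simp add: abs_mult)
    thus ?thesis using Qpos by (simp add: field_simps)
  qed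
  have uik: "real_of_int \<bar>U$$(i,k)\<bar> \<le> sqrt C * Q" if k: "k < Suc n" and i: "i < n" for i k
  proof -
    have "(real_of_int (U$$(i,k)) / Q)^2 \<le> (\<Sum>i<n. (real_of_int (U$$(i,k)) / Q)^2)"
      using i by (intro member_le_sum) auto
    also have "\<dots> \<le> C" using qfk[OF k] by (smt (verit) zero_le_power2)
    finally have "\<bar>real_of_int (U$$(i,k)) / Q\<bar> \<le> sqrt C" by (rule sq_le_sqrt)
    thus ?thesis using Qpos by (simp add: field_simps)
  qed
  define K where "K = sqrt C * (1 + (\<Sum>j<n. \<bar>\<alpha> j\<bar>))"
  have Sa: "(\<Sum>j<n. \<bar>\<alpha> j\<bar>) \<ge> 0" by (intro sum_nonneg) auto
  have ent_bound: "real_of_int \<bar>U$$(i,k)\<bar> \<le> K * Q" if k: "k < Suc n" and i: "i < Suc n" for i k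
  proof (cases "i < n")
    case True
    have "sqrt C * Q \<le> K * Q" unfolding K_def using Sa sC Qpos
      by (intro mult_right_mono) (auto simp: algebra_simps)
    thus ?thesis using uik[OF k True] by simp
  next
    case False
    hence iN: "i = n" using i by simp
    have "real_of_int (U$$(n,k)) = l k - (\<Sum>j<n. \<alpha> j * real_of_int (U$$(j,k)))" unfolding l_def by simp
    hence t1: "real_of_int \<bar>U$$(n,k)\<bar> \<le> \<bar>l k\<bar> + \<bar>\<Sum>j<n. \<alpha> j * real_of_int (U$$(j,k))\<bar>" by simp
    have t2: "\<bar>\<Sum>j<n. \<alpha> j * real_of_int (U$$(j,k))\<bar> \<le> (\<Sum>j<n. \<bar>\<alpha> j\<bar>) * (sqrt C * Q)"
    proof -
      have "\<bar>\<Sum>j<n. \<alpha> j * real_of_int (U$$(j,k))\<bar> \<le> (\<Sum>j<n. \<bar>\<alpha> j * real_of_int (U$$(j,k))\<bar>)"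
        by (rule sum_abs)
      also have "\<dots> \<le> (\<Sum>j<n. \<bar>\<alpha> j\<bar> * (sqrt C * Q))"
        using uik[OF k] by (intro sum_mono) (auto simp: abs_mult intro!: mult_left_mono)
      also have "\<dots> = (\<Sum>j<n. \<bar>\<alpha> j\<bar>) * (sqrt C * Q)"
        by (rule sum_distrib_right[symmetric])
      finally show ?thesis .
    qed
    have t3: "\<bar>l k\<bar> \<le> sqrt C * Q"
    proof -
      have "sqrt C / Q^n \<le> sqrt C" using Qn sC by (simp add: divide_le_eq)
      also have "\<dots> \<le> sqrt C * Q" using sC Q by simp
      finally show ?thesis using lk[OF k] by simp
    qed
    have "real_of_int \<bar>U$$(n,k)\<bar> \<le> sqrt C * Q + (\<Sum>j<n. \<bar>\<alpha> j\<bar>) * (sqrt C * Q)"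
      using t1 t2 t3 by linarith
    also have "\<dots> = K * Q" unfolding K_def by (simp add: algebra_simps)
    finally show ?thesis unfolding iN .
  qed
  have Kpos: "K \<ge> 0" unfolding K_def using Sa sC by simp
  show "real_vec_sup_norm (rM (transpose_mat U) *\<^sub>v ext_vec n \<alpha>) \<le> sqrt C / Q^n"
  proof (rule rvsn_le)
    show "0 \<le> sqrt C / Q^n" using Qpos C by simp
    fix k assume "k < dim_vec (rM (transpose_mat U) *\<^sub>v ext_vec n \<alpha>)"
    hence k: "k < Suc n" using Uc by simp
    have "(rM (transpose_mat U) *\<^sub>v ext_vec n \<alpha>) $ k = (\<Sum>j = 0..<Suc n. real_of_int (U$$(j,k)) * ext_vec n \<alpha> $ j)"
      using k Uc by (simp add: scalar_prod_def ext_vec_def)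
    also have "\<dots> = l k"
      unfolding l_def by (simp add: sum.atLeast0_lessThan_Suc ext_vec_def atLeast0LessThan mult.commute)
    finally show "\<bar>(rM (transpose_mat U) *\<^sub>v ext_vec n \<alpha>) $ k\<bar> \<le> sqrt C / Q^n" using lk[OF k] by simp
  qed
  show "mat_sup_norm (transpose_mat U) \<le> sqrt C * (1 + (\<Sum>j<n. \<bar>\<alpha> j\<bar>)) * Q"
    unfolding K_def[symmetric]
    by (rule msn_le) (use Kpos Qpos ent_bound Uc in auto)
  show "1 \<le> mat_sup_norm (transpose_mat U)"
  proof -
    have e0: "unit_vec (Suc n) 0 \<in> carrier_vec (Suc n) \<and> (unit_vec (Suc n) 0 :: int vec) \<noteq> 0\<^sub>v (Suc n)"
      by (auto simp: unit_vec_def vec_eq_iff)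
    have nz: "U *\<^sub>v unit_vec (Suc n) 0 \<noteq> 0\<^sub>v (Suc n)" using GL_nonzero[OF U] e0 by blast
    obtain i where i: "i < Suc n" "U$$(i,0) \<noteq> 0"
    proof -
      { assume a: "\<forall>i<Suc n. U$$(i,0) = 0"
        have "U *\<^sub>v unit_vec (Suc n) 0 = 0\<^sub>v (Suc n)"
        proof (rule eq_vecI)
          fix i assume "i < dim_vec (0\<^sub>v (Suc n) :: int vec)"
          hence i: "i < Suc n" by simp
          have "row U i \<in> carrier_vec (Suc n)" using Uc by (intro carrier_vecI) simp
          thus "(U *\<^sub>v unit_vec (Suc n) 0) $ i = 0\<^sub>v (Suc n) $ i" using i Uc a by simp
        qed (use Uc in simp)
        with nz have False by simp }
      thus ?thesis using that by blast
    qed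
    have "1 \<le> real_of_int \<bar>transpose_mat U $$ (0,i)\<bar>" using i Uc by simp
    also have "\<dots> \<le> mat_sup_norm (transpose_mat U)" by (rule msn_ge) (use i Uc in auto)
    finally show ?thesis .
  qed
qed

theorem mainTheorem8:
  fixes n :: nat and \<alpha> :: "nat \<Rightarrow> real"
  assumes "n \<ge> 1"
    and "lin_indep_with_one n \<alpha>"
    and "badly_approximable n \<alpha>"
  shows "\<exists>c>0. infinite {A \<in> GL_int (n+1).
           real_vec_sup_norm (map_mat real_of_int A *\<^sub>v ext_vec n \<alpha>)
             < c * mat_sup_norm A powr (- real n)}"
proof -
  have n1: "n \<ge> 1" using assms(1) .
  obtain c0 where c0: "c0 > 0" and BA: "\<forall>q. (\<exists>i<n. q i \<noteq> 0) \<longrightarrow>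
        dist_int (lin_form n \<alpha> q) \<ge> c0 * int_vec_sup_norm n q powr (- real n)"
    using assms(3) unfolding badly_approximable_def by blast
  define m0 where "m0 = min 1 (c0^2)"
  have m0: "m0 > 0" using c0 unfolding m0_def by simp
  obtain C where C: "\<forall>G. G \<in> carrier_mat (Suc n) (Suc n) \<longrightarrow> transpose_mat G = G \<longrightarrow> det G \<le> 1
             \<longrightarrow> minb G (Suc n) m0 \<longrightarrow> (\<exists>U\<in>GL_int (Suc n). \<forall>k<Suc n. qf G (col (rM U) k) \<le> C)"
    using reduction[of "Suc n"] m0 by blast
  define Cm where "Cm = max C 1"
  have Cm1: "Cm \<ge> 1" unfolding Cm_def by simp
  define K where "K = sqrt Cm * (1 + (\<Sum>j<n. \<bar>\<alpha> j\<bar>))"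
  have Sa: "(\<Sum>j<n. \<bar>\<alpha> j\<bar>) \<ge> 0" by (intro sum_nonneg) auto
  have K1: "K \<ge> 1"
  proof -
    have "1 * 1 \<le> sqrt Cm * (1 + (\<Sum>j<n. \<bar>\<alpha> j\<bar>))" by (rule mult_mono) (use Cm1 Sa in auto)
    thus ?thesis unfolding K_def by simp
  qed
  define c where "c = sqrt Cm * K^n + 1"
  have cpos: "c > 0" unfolding c_def using K1 Cm1 by (simp add: add_pos_nonneg)
  define f where "f A = real_vec_sup_norm (map_mat real_of_int A *\<^sub>v ext_vec n \<alpha>)" for A
  have main: "\<exists>A \<in> GL_int (n+1). f A \<le> sqrt Cm / Q^n \<and> mat_sup_norm A \<le> K * Q \<and> 1 \<le> mat_sup_norm A"
    if Q: "Q \<ge> 1" for Q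
  proof -
    have Qpos: "Q > 0" using Q by simp
    have mb: "minb (GQ n \<alpha> Q) (Suc n) m0" unfolding m0_def by (rule GQ_minb[OF Q c0 BA])
    have d1: "det (GQ n \<alpha> Q) \<le> 1" using det_GQ[OF Qpos] by simp
    obtain U where U: "U \<in> GL_int (Suc n)" and Ub: "\<forall>k<Suc n. qf (GQ n \<alpha> Q) (col (rM U) k) \<le> C"
      using C[rule_format, OF GQ_carrier GQ_sym d1 mb] by blast
    have Ub': "\<forall>k<Suc n. qf (GQ n \<alpha> Q) (col (rM U) k) \<le> Cm"
      using Ub unfolding Cm_def by (meson max.coboundedI1)
    note ap = approx[OF Q Cm1 U Ub']
    have "transpose_mat U \<in> GL_int (n+1)" using GL_transpose[OF U] by simp
    thus ?thesis using ap unfolding f_def K_def by blast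
  qed
  define T where "T = {A \<in> GL_int (n+1).
           real_vec_sup_norm (map_mat real_of_int A *\<^sub>v ext_vec n \<alpha>)
             < c * mat_sup_norm A powr (- real n)}"
  have inT: "A \<in> T" if A: "A \<in> GL_int (n+1)" and fA: "f A \<le> sqrt Cm / Q^n"
    and nA: "mat_sup_norm A \<le> K * Q" and nA1: "1 \<le> mat_sup_norm A" and Q: "Q \<ge> 1" for A Q
  proof -
    have Qpos: "Q > 0" using Q by simp
    define M where "M = mat_sup_norm A"
    have Mpos: "M > 0" using nA1 unfolding M_def by simp
    have pw: "M powr (- real n) = 1 / M^n" using Mpos by (simp add: powr_minus powr_realpow divide_inverse)
    have "M^n \<le> (K * Q)^n" using nA Mpos unfolding M_def by (intro power_mono) auto
    moreover have "0 < (K * Q)^n * M^n" using Mpos K1 Qpos by simp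
    ultimately have "1 / (K * Q)^n \<le> 1 / M^n" by (intro divide_left_mono) auto
    hence le: "c / (K * Q)^n \<le> c * M powr (- real n)" unfolding pw using cpos
      using mult_left_mono[of "1 / (K * Q)^n" "1 / M^n" c] by simp
    have KQ: "(K * Q)^n = K^n * Q^n" by (simp add: power_mult_distrib)
    have Kn: "K^n > 0" using K1 by simp
    have Qn: "Q^n > 0" using Qpos by simp
    have "sqrt Cm / Q^n = (sqrt Cm * K^n) / (K * Q)^n" unfolding KQ using Kn K1 by simp
    also have "\<dots> < c / (K * Q)^n" unfolding c_def KQ using Kn Qn by (intro divide_strict_right_mono) auto
    finally have "f A < c * M powr (- real n)" using fA le by linarith
    thus ?thesis unfolding T_def M_def f_def using A by blast
  qed
  have fpos: "f A > 0" if "A \<in> T" for A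
    using that Aext_pos[of A n \<alpha>] unfolding T_def f_def by simp
  have "infinite T"
  proof
    assume fin: "finite T"
    obtain A0 where "A0 \<in> GL_int (n+1)" "f A0 \<le> sqrt Cm / 1^n" "mat_sup_norm A0 \<le> K * 1" "1 \<le> mat_sup_norm A0"
      using main[of 1] by auto
    hence "A0 \<in> T" using inT[of A0 1] by simp
    hence ne: "f ` T \<noteq> {}" by blast
    define \<epsilon> where "\<epsilon> = Min (f ` T)"
    have eps: "\<epsilon> > 0" unfolding \<epsilon>_def using fin ne fpos by (subst Min_gr_iff) auto
    define Q where "Q = max 1 (2 * sqrt Cm / \<epsilon>)"
    have Q: "Q \<ge> 1" unfolding Q_def by simp
    obtain A where A: "A \<in> GL_int (n+1)" "f A \<le> sqrt Cm / Q^n" "mat_sup_norm A \<le> K * Q" "1 \<le> mat_sup_norm A"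
      using main[OF Q] by auto
    have AT: "A \<in> T" using inT[OF A Q] .
    have "Q \<le> Q^n" using Q n1 by (intro self_le_power) auto
    hence "sqrt Cm / Q^n \<le> sqrt Cm / Q" using Q Cm1 by (intro divide_left_mono) auto
    also have "\<dots> \<le> \<epsilon> / 2"
    proof -
      have "2 * sqrt Cm / \<epsilon> \<le> Q" unfolding Q_def by simp
      hence "2 * sqrt Cm \<le> Q * \<epsilon>" using eps by (simp add: divide_le_eq)
      thus ?thesis using Q by (simp add: divide_le_eq mult.commute)
    qed
    finally have "f A < \<epsilon>" using A(2) eps by linarith
    moreover have "\<epsilon> \<le> f A" unfolding \<epsilon>_def using fin AT by (intro Min_le) auto
    ultimately show False by simp
  qed
  thus ?thesis using cpos unfolding T_def by blast
qed

end
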